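(* Let $k\ge2$, $0\le\alpha<1$, and let $G$ be a connected $k$-uniform hypergraph with $\alpha$-Perron vector $x$. Let $e,f\in E(G)$ with $e\cap f=\emptyset$, and let $U\subset e$, $V\subset f$ with $1\le|U|=|V|\le k-1$. Let $e'=U\cup(f\setminus V)$ and $f'=V\cup(e\setminus U)$, and suppose $e',f'\notin E(G)$. Let $G'$ be obtained from $G$ by deleting $e,f$ and adding $e',f'$. Writing $x_S=\prod_{w\in S}x_w$ for $S\subseteq V(G)$, if $x_U\ge x_V$ and $x_{e\setminus U}\le x_{f\setminus V}$, with at least one of these two inequalities strict, then $\rho_\alpha(G)<\rho_\alpha(G')$.
   Context: Hypergraphs are finite with edges being sets; $k$-uniform means every edge has $k$ vertices; degrees count edges containing a vertex. $\mathcal A(G)$ is the order-$k$ tensor with $(i_1,\dots,i_k)$-entry $\frac1{(k-1)!}$ if $\{i_1,\dots,i_k\}\in E(G)$, $0$ otherwise; $\mathcal D(G)$ is the diagonal tensor of degrees; $\mathcal A_\alpha(G)=\alpha\mathcal D(G)+(1-\alpha)\mathcal A(G)$. For an order-$k$ tensor $\mathcal T$, $(\mathcal Tx)_i=\sum_{i_2,\dots,i_k}\mathcal T_{ii_2\dots i_k}x_{i_2}\cdots x_{i_k}$; $\lambda$ is an eigenvalue if $\mathcal Tx=\lambda x^{[k-1]}$ for some $x\ne0$. $\rho_\alpha(G)$ is the largest modulus of an eigenvalue of $\mathcal A_\alpha(G)$. Connected: any two vertices joined by a path (alternating sequence of distinct vertices and distinct edges, consecutive vertices lying in the edge between them). For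 connected $G$, the $\alpha$-Perron vector is the unique entrywise positive $x$ with $\sum_i x_i^k=1$ and $\mathcal A_\alpha(G)x=\rho_\alpha(G)x^{[k-1]}$. *)

theory Defs
  imports Complex_Main
begin

text \<open>A hypergraph is given by a vertex set VV and an edge set E (a set of vertex sets).
  Order-k tensors on VV are functions from index lists (of length k, entries in VV) to reals.\<close>

definition k_uniform :: "'a set \<Rightarrow> 'a set set \<Rightarrow> nat \<Rightarrow> bool" where
  "k_uniform VV E k \<longleftrightarrow> finite VV \<and> (\<forall>e\<in>E. e \<subseteq> VV \<and> card e = k)"

definition degree :: "'a set set \<Rightarrow> 'a \<Rightarrow> nat" where
  "degree E i = card {e\<in>E. i \<in> e}"

definition is_path :: "'a set set \<Rightarrow> 'a list \<Rightarrow> 'a set list \<Rightarrow> bool" where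
  "is_path E vs es \<longleftrightarrow> vs \<noteq> [] \<and> length es + 1 = length vs \<and> distinct vs \<and> distinct es
     \<and> set es \<subseteq> E \<and> (\<forall>j<length es. vs ! j \<in> es ! j \<and> vs ! (Suc j) \<in> es ! j)"

definition hg_connected :: "'a set \<Rightarrow> 'a set set \<Rightarrow> bool" where
  "hg_connected VV E \<longleftrightarrow> (\<forall>u\<in>VV. \<forall>v\<in>VV. \<exists>vs es. is_path E vs es \<and> hd vs = u \<and> last vs = v)"

definition index_tuples :: "'a set \<Rightarrow> nat \<Rightarrow> 'a list set" where
  "index_tuples VV m = {is. set is \<subseteq> VV \<and> length is = m}"

definition tensor_apply :: "'a set \<Rightarrow> nat \<Rightarrow> ('a list \<Rightarrow> real) \<Rightarrow> ('a \<Rightarrow> complex) \<Rightarrow> 'a \<Rightarrow> complex" where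
  "tensor_apply VV k T x i = (\<Sum>is\<in>index_tuples VV (k - 1). complex_of_real (T (i # is)) * prod_list (map x is))"

definition tensor_eigenvalue :: "'a set \<Rightarrow> nat \<Rightarrow> ('a list \<Rightarrow> real) \<Rightarrow> complex \<Rightarrow> bool" where
  "tensor_eigenvalue VV k T lam \<longleftrightarrow>
     (\<exists>x. (\<exists>i\<in>VV. x i \<noteq> 0) \<and> (\<forall>i\<in>VV. tensor_apply VV k T x i = lam * x i ^ (k - 1)))"

definition tensor_spectral_radius :: "'a set \<Rightarrow> nat \<Rightarrow> ('a list \<Rightarrow> real) \<Rightarrow> real" where
  "tensor_spectral_radius VV k T = Sup {cmod lam | lam. tensor_eigenvalue VV k T lam}"

definition adj_tensor :: "'a set set \<Rightarrow> nat \<Rightarrow> 'a list \<Rightarrow> real" where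
  "adj_tensor E k is = (if set is \<in> E then 1 / fact (k - 1) else 0)"

definition deg_tensor :: "'a set set \<Rightarrow> 'a list \<Rightarrow> real" where
  "deg_tensor E is = (case is of [] \<Rightarrow> 0
     | i # _ \<Rightarrow> (if \<forall>j\<in>set is. j = i then real (degree E i) else 0))"

definition A_alpha :: "'a set set \<Rightarrow> nat \<Rightarrow> real \<Rightarrow> 'a list \<Rightarrow> real" where
  "A_alpha E k \<alpha> is = \<alpha> * deg_tensor E is + (1 - \<alpha>) * adj_tensor E k is"

definition rho_alpha :: "'a set \<Rightarrow> 'a set set \<Rightarrow> nat \<Rightarrow> real \<Rightarrow> real" where
  "rho_alpha VV E k \<alpha> = tensor_spectral_radius VV k (A_alpha E k \<alpha>)"

text \<open>alpha-Perron vector: entrywise positive, sum of k-th powers 1, eigenvector for rho_alpha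
  (it is unique for connected G; the predicate just states its defining properties).\<close>
definition alpha_perron_vector :: "'a set \<Rightarrow> 'a set set \<Rightarrow> nat \<Rightarrow> real \<Rightarrow> ('a \<Rightarrow> real) \<Rightarrow> bool" where
  "alpha_perron_vector VV E k \<alpha> x \<longleftrightarrow>
     (\<forall>i\<in>VV. x i > 0) \<and> (\<Sum>i\<in>VV. x i ^ k) = 1 \<and>
     (\<forall>i\<in>VV. tensor_apply VV k (A_alpha E k \<alpha>) (\<lambda>j. complex_of_real (x j)) i
               = complex_of_real (rho_alpha VV E k \<alpha>) * complex_of_real (x i) ^ (k - 1))"

end

theory Submission
  imports Defs "HOL-Analysis.Analysis" "HOL-Combinatorics.Multiset_Permutations"
begin


definition Ta :: "'a set \<Rightarrow> nat \<Rightarrow> ('a list \<Rightarrow> real) \<Rightarrow> ('a \<Rightarrow> real) \<Rightarrow> 'a \<Rightarrow> real" where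
  "Ta V k T y i = (\<Sum>is\<in>index_tuples V (k - 1). T (i # is) * prod_list (map y is))"

definition grad :: "'a set set \<Rightarrow> nat \<Rightarrow> real \<Rightarrow> ('a \<Rightarrow> real) \<Rightarrow> 'a \<Rightarrow> real" where
  "grad E k \<alpha> y i = \<alpha> * real (Defs.degree E i) * y i ^ (k - 1)
      + (1 - \<alpha>) * (\<Sum>e\<in>{e\<in>E. i \<in> e}. \<Prod>v\<in>e - {i}. y v)"

definition Phg :: "'a set \<Rightarrow> 'a set set \<Rightarrow> nat \<Rightarrow> real \<Rightarrow> ('a \<Rightarrow> real) \<Rightarrow> real" where
  "Phg V E k \<alpha> y = \<alpha> * (\<Sum>i\<in>V. real (Defs.degree E i) * y i ^ k) + (1 - \<alpha>) * real k * (\<Sum>e\<in>E. \<Prod>v\<in>e. y v)"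

lemma of_real_prod_list: "complex_of_real (prod_list (map y xs)) = prod_list (map (\<lambda>j. complex_of_real (y j)) xs)"
  by (induction xs) auto

lemma tensor_apply_real:
  "tensor_apply V k T (\<lambda>j. complex_of_real (y j)) i = complex_of_real (Ta V k T y i)"
  unfolding tensor_apply_def Ta_def by (simp add: of_real_prod_list)

lemma finite_tuples: "finite V \<Longrightarrow> finite (index_tuples V m)"
  unfolding index_tuples_def by (rule finite_lists_length_eq)

lemma finite_E: "k_uniform V E k \<Longrightarrow> finite E"
  unfolding k_uniform_def by (meson Pow_iff finite_Pow_iff rev_finite_subset subsetI)

lemma deg_part:
  assumes "i \<in> V" "finite V"
  shows "(\<Sum>is\<in>index_tuples V m. deg_tensor E (i # is) * prod_list (map y is)) = real (Defs.degree E i) * y i ^ m"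
proof -
  have s: "{is \<in> index_tuples V m. \<forall>j\<in>set is. j = i} = {replicate m i}"
    using assms(1) by (auto simp: index_tuples_def intro: replicate_eqI)
  have "(\<Sum>is\<in>index_tuples V m. deg_tensor E (i # is) * prod_list (map y is))
     = (\<Sum>is\<in>index_tuples V m. if (\<forall>j\<in>set is. j = i) then real (Defs.degree E i) * prod_list (map y is) else 0)"
    by (rule sum.cong) (auto simp: deg_tensor_def)
  also have "\<dots> = (\<Sum>is\<in>{is \<in> index_tuples V m. \<forall>j\<in>set is. j = i}. real (Defs.degree E i) * prod_list (map y is))"
    by (simp add: sum.inter_filter finite_tuples assms)
  also have "\<dots> = real (Defs.degree E i) * y i ^ m" by (simp add: s)
  finally show ?thesis .
qed

lemma tuples_eq_perms:
  assumes "k_uniform V E k" "e \<in> E" "i \<in> e" "k \<ge> 1"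
  shows "{is \<in> index_tuples V (k - 1). set (i # is) = e} = permutations_of_set (e - {i})"
proof -
  have eV: "e \<subseteq> V" and ce: "card e = k" and fe: "finite e"
    using assms unfolding k_uniform_def by (auto intro: finite_subset)
  show ?thesis
  proof (intro set_eqI iffI)
    fix xs assume "xs \<in> {is \<in> index_tuples V (k - 1). set (i # is) = e}"
    then have l: "length xs = k - 1" and s: "set (i # xs) = e" by (auto simp: index_tuples_def)
    then have "card (set (i # xs)) = length (i # xs)" using ce assms(4) by simp
    then have "distinct (i # xs)" by (rule card_distinct)
    then show "xs \<in> permutations_of_set (e - {i})" using s by (auto simp: permutations_of_set_def)
  next
    fix xs assume "xs \<in> permutations_of_set (e - {i})"
    then have d: "distinct xs" and s: "set xs = e - {i}" by (auto simp: permutations_of_set_def)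
    then have "length xs = k - 1" using ce assms(3) fe by (metis card_Diff_singleton distinct_card)
    then show "xs \<in> {is \<in> index_tuples V (k - 1). set (i # is) = e}"
      using s eV assms(3) by (auto simp: index_tuples_def)
  qed
qed

lemma adj_part:
  assumes "k_uniform V E k" "i \<in> V" "k \<ge> 1"
  shows "(\<Sum>is\<in>index_tuples V (k - 1). adj_tensor E k (i # is) * prod_list (map y is))
         = (\<Sum>e\<in>{e\<in>E. i \<in> e}. \<Prod>v\<in>e - {i}. y v)"
proof -
  have fV: "finite V" using assms unfolding k_uniform_def by auto
  have fE: "finite E" using finite_E[OF assms(1)] .
  let ?Ei = "{e\<in>E. i \<in> e}"
  let ?c = "1 / fact (k - 1) :: real"
  have fEi: "finite ?Ei" using fE by auto
  have "(\<Sum>is\<in>index_tuples V (k - 1). adj_tensor E k (i # is) * prod_list (map y is))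
      = (\<Sum>is\<in>index_tuples V (k - 1). \<Sum>e\<in>?Ei. if set (i # is) = e then ?c * prod_list (map y is) else 0)"
  proof (rule sum.cong[OF refl])
    fix xs
    have "(\<Sum>e\<in>?Ei. if set (i # xs) = e then ?c * prod_list (map y xs) else 0)
        = (if set (i # xs) \<in> ?Ei then ?c * prod_list (map y xs) else 0)"
      using fEi by (simp add: sum.delta)
    then show "adj_tensor E k (i # xs) * prod_list (map y xs) = (\<Sum>e\<in>?Ei. if set (i # xs) = e then ?c * prod_list (map y xs) else 0)"
      by (simp add: adj_tensor_def)
  qed
  also have "\<dots> = (\<Sum>e\<in>?Ei. \<Sum>is\<in>index_tuples V (k - 1). if set (i # is) = e then ?c * prod_list (map y is) else 0)"
    by (rule sum.swap)
  also have "\<dots> = (\<Sum>e\<in>?Ei. \<Prod>v\<in>e - {i}. y v)"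
  proof (rule sum.cong[OF refl])
    fix e assume eE: "e \<in> ?Ei"
    have fe: "finite e" and ce: "card e = k" using eE assms(1) unfolding k_uniform_def by (auto intro: finite_subset)
    have "(\<Sum>is\<in>index_tuples V (k - 1). if set (i # is) = e then ?c * prod_list (map y is) else 0)
        = (\<Sum>is\<in>{is \<in> index_tuples V (k - 1). set (i # is) = e}. ?c * prod_list (map y is))"
      by (rule sum.inter_filter[symmetric], simp add: finite_tuples fV)
    also have "\<dots> = (\<Sum>is\<in>permutations_of_set (e - {i}). ?c * prod_list (map y is))"
      using tuples_eq_perms[OF assms(1) _ _ assms(3), of e] eE by simp
    also have "\<dots> = (\<Sum>is\<in>permutations_of_set (e - {i}). ?c * (\<Prod>v\<in>e - {i}. y v))"
      by (rule sum.cong[OF refl]) (metis permutations_of_setD prod.distinct_set_conv_list)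
    also have "\<dots> = fact (k - 1) * ?c * (\<Prod>v\<in>e - {i}. y v)"
      using fe ce eE by simp
    also have "\<dots> = (\<Prod>v\<in>e - {i}. y v)" by simp
    finally show "(\<Sum>is\<in>index_tuples V (k - 1). if set (i # is) = e then ?c * prod_list (map y is) else 0) = (\<Prod>v\<in>e - {i}. y v)" .
  qed
  finally show ?thesis .
qed

lemma Ta_grad:
  assumes "k_uniform V E k" "i \<in> V" "k \<ge> 1"
  shows "Ta V k (A_alpha E k \<alpha>) y i = grad E k \<alpha> y i"
proof -
  have fV: "finite V" using assms unfolding k_uniform_def by auto
  have "Ta V k (A_alpha E k \<alpha>) y i =
     \<alpha> * (\<Sum>is\<in>index_tuples V (k - 1). deg_tensor E (i # is) * prod_list (map y is))
     + (1 - \<alpha>) * (\<Sum>is\<in>index_tuples V (k - 1). adj_tensor E k (i # is) * prod_list (map y is))"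
    unfolding Ta_def A_alpha_def by (simp add: ring_distribs sum.distrib sum_distrib_left mult.assoc)
  also have "\<dots> = \<alpha> * (real (Defs.degree E i) * y i ^ (k - 1)) + (1 - \<alpha>) * (\<Sum>e\<in>{e\<in>E. i \<in> e}. \<Prod>v\<in>e - {i}. y v)"
    by (simp only: deg_part[OF assms(2) fV] adj_part[OF assms])
  finally show ?thesis by (simp add: grad_def mult.assoc)
qed




lemma sum_grad:
  assumes "k_uniform V E k" "k \<ge> 1"
  shows "(\<Sum>i\<in>V. y i * grad E k \<alpha> y i) = Phg V E k \<alpha> y"
proof -
  have fV: "finite V" using assms unfolding k_uniform_def by auto
  have fE: "finite E" using finite_E[OF assms(1)] .
  have a: "y i * y i ^ (k - 1) = y i ^ k" for i
    using assms(2) by (metis Suc_diff_le diff_Suc_1 power_Suc)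
  have "(\<Sum>i\<in>V. y i * (\<Sum>e\<in>{e\<in>E. i \<in> e}. \<Prod>v\<in>e - {i}. y v))
      = (\<Sum>i\<in>V. \<Sum>e\<in>E. if i \<in> e then (\<Prod>v\<in>e. y v) else 0)"
  proof (rule sum.cong[OF refl])
    fix i assume "i \<in> V"
    have "y i * (\<Sum>e\<in>{e\<in>E. i \<in> e}. \<Prod>v\<in>e - {i}. y v) = (\<Sum>e\<in>{e\<in>E. i \<in> e}. \<Prod>v\<in>e. y v)"
      unfolding sum_distrib_left
    proof (rule sum.cong[OF refl])
      fix e assume "e \<in> {e\<in>E. i \<in> e}"
      then have "finite e" "i \<in> e" using assms(1) fV unfolding k_uniform_def by (auto intro: finite_subset)
      then show "y i * (\<Prod>v\<in>e - {i}. y v) = (\<Prod>v\<in>e. y v)" by (simp add: prod.remove)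
    qed
    also have "\<dots> = (\<Sum>e\<in>E. if i \<in> e then (\<Prod>v\<in>e. y v) else 0)"
      by (rule sum.inter_filter[OF fE])
    finally show "y i * (\<Sum>e\<in>{e\<in>E. i \<in> e}. \<Prod>v\<in>e - {i}. y v) = (\<Sum>e\<in>E. if i \<in> e then (\<Prod>v\<in>e. y v) else 0)" .
  qed
  also have "\<dots> = (\<Sum>e\<in>E. \<Sum>i\<in>V. if i \<in> e then (\<Prod>v\<in>e. y v) else 0)" by (rule sum.swap)
  also have "\<dots> = (\<Sum>e\<in>E. real k * (\<Prod>v\<in>e. y v))"
  proof (rule sum.cong[OF refl])
    fix e assume eE: "e \<in> E"
    then have eV: "e \<subseteq> V" and ce: "card e = k" using assms(1) unfolding k_uniform_def by auto
    have "(\<Sum>i\<in>V. if i \<in> e then (\<Prod>v\<in>e. y v) else 0) = (\<Sum>i\<in>{i\<in>V. i \<in> e}. (\<Prod>v\<in>e. y v))"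
      by (rule sum.inter_filter[OF fV, symmetric])
    also have "{i\<in>V. i \<in> e} = e" using eV by auto
    finally show "(\<Sum>i\<in>V. if i \<in> e then (\<Prod>v\<in>e. y v) else 0) = real k * (\<Prod>v\<in>e. y v)" using ce by simp
  qed
  finally have b: "(\<Sum>i\<in>V. y i * (\<Sum>e\<in>{e\<in>E. i \<in> e}. \<Prod>v\<in>e - {i}. y v)) = real k * (\<Sum>e\<in>E. \<Prod>v\<in>e. y v)"
    by (simp add: sum_distrib_left)
  have "(\<Sum>i\<in>V. y i * grad E k \<alpha> y i) = \<alpha> * (\<Sum>i\<in>V. real (Defs.degree E i) * (y i * y i ^ (k - 1)))
      + (1 - \<alpha>) * (\<Sum>i\<in>V. y i * (\<Sum>e\<in>{e\<in>E. i \<in> e}. \<Prod>v\<in>e - {i}. y v))"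
    unfolding grad_def by (simp add: ring_distribs sum.distrib sum_distrib_left mult_ac)
  also have "\<dots> = Phg V E k \<alpha> y" unfolding a b Phg_def by (simp add: mult_ac)
  finally show ?thesis .
qed

lemma Phg_cong:
  assumes "k_uniform V E k" "\<And>v. v \<in> V \<Longrightarrow> y v = z v"
  shows "Phg V E k \<alpha> y = Phg V E k \<alpha> z"
proof -
  have "(\<Sum>e\<in>E. \<Prod>v\<in>e. y v) = (\<Sum>e\<in>E. \<Prod>v\<in>e. z v)"
    using assms unfolding k_uniform_def by (intro sum.cong prod.cong) auto
  then show ?thesis unfolding Phg_def using assms(2) by simp
qed

lemma grad_cong:
  assumes "k_uniform V E k" "\<And>v. v \<in> V \<Longrightarrow> y v = z v" "i \<in> V"
  shows "grad E k \<alpha> y i = grad E k \<alpha> z i"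
proof -
  have "(\<Sum>e\<in>{e\<in>E. i \<in> e}. \<Prod>v\<in>e - {i}. y v) = (\<Sum>e\<in>{e\<in>E. i \<in> e}. \<Prod>v\<in>e - {i}. z v)"
    using assms unfolding k_uniform_def by (intro sum.cong prod.cong) auto
  then show ?thesis unfolding grad_def using assms by simp
qed

lemma Phg_scale:
  assumes "k_uniform V E k"
  shows "Phg V E k \<alpha> (\<lambda>v. c * y v) = c ^ k * Phg V E k \<alpha> y"
proof -
  have "(\<Sum>e\<in>E. \<Prod>v\<in>e. c * y v) = (\<Sum>e\<in>E. c ^ k * (\<Prod>v\<in>e. y v))"
    using assms unfolding k_uniform_def by (intro sum.cong) (auto simp: prod.distrib)
  then have h2: "(\<Sum>e\<in>E. \<Prod>v\<in>e. c * y v) = c ^ k * (\<Sum>e\<in>E. \<Prod>v\<in>e. y v)"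
    by (simp add: sum_distrib_left)
  have h1: "(\<Sum>i\<in>V. real (Defs.degree E i) * (c * y i) ^ k) = c ^ k * (\<Sum>i\<in>V. real (Defs.degree E i) * y i ^ k)"
    by (simp add: power_mult_distrib sum_distrib_left mult_ac)
  show ?thesis unfolding Phg_def h1 h2 by (simp add: algebra_simps)
qed

definition Sset :: "'a set \<Rightarrow> nat \<Rightarrow> ('a \<Rightarrow> real) set" where
  "Sset V k = {y. (\<forall>i\<in>V. 0 \<le> y i) \<and> (\<forall>i. i \<notin> V \<longrightarrow> y i = 0) \<and> (\<Sum>i\<in>V. y i ^ k) = 1}"

lemma homog:
  assumes "k_uniform V E k" "k \<ge> 2" "\<forall>w\<in>Sset V k. Phg V E k \<alpha> w \<le> \<mu>"
    and "\<And>i. i \<in> V \<Longrightarrow> 0 \<le> z i"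
  shows "Phg V E k \<alpha> z \<le> \<mu> * (\<Sum>i\<in>V. z i ^ k)"
proof -
  have fV: "finite V" using assms unfolding k_uniform_def by auto
  let ?s = "\<Sum>i\<in>V. z i ^ k"
  have s0: "?s \<ge> 0" using assms(4) by (simp add: sum_nonneg)
  show ?thesis
  proof (cases "?s = 0")
    case True
    then have z0: "\<And>i. i \<in> V \<Longrightarrow> z i = 0"
    proof -
      fix i assume iV: "i \<in> V"
      have "\<forall>i\<in>V. z i ^ k = 0" using True assms(4) by (subst (asm) sum_nonneg_eq_0_iff[OF fV]) auto
      then show "z i = 0" using iV assms(2) by auto
    qed
    have "Phg V E k \<alpha> z = Phg V E k \<alpha> (\<lambda>_. 0)" by (rule Phg_cong[OF assms(1)]) (simp add: z0)
    also have "\<dots> = 0"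
    proof -
      have "(\<Prod>v\<in>e. (0::real)) = 0" if "e \<in> E" for e
        using that assms(1,2) unfolding k_uniform_def by (auto intro: finite_subset)
      then have "(\<Sum>e\<in>E. \<Prod>v\<in>e. (0::real)) = 0" by (intro sum.neutral) auto
      moreover have "(\<Sum>i\<in>V. real (Defs.degree E i) * (0::real) ^ k) = 0" using assms(2) by (simp add: power_0_left)
      ultimately show ?thesis unfolding Phg_def by simp
    qed
    finally show ?thesis using True by simp
  next
    case False
    then have sp: "?s > 0" using s0 by simp
    define c where "c = root k ?s"
    have cp: "c > 0" using sp assms(2) by (simp add: c_def)
    have ck: "c ^ k = ?s" using real_root_pow_pos2[of k ?s] s0 assms(2) by (simp add: c_def)
    define w where "w = (\<lambda>v. if v \<in> V then z v / c else 0)"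
    have "(\<Sum>i\<in>V. w i ^ k) = (\<Sum>i\<in>V. z i ^ k / c ^ k)"
      by (rule sum.cong) (auto simp: w_def power_divide)
    also have "\<dots> = 1" using ck sp by (simp add: sum_divide_distrib[symmetric])
    finally have "w \<in> Sset V k" unfolding Sset_def using assms(4) cp by (auto simp: w_def)
    then have "Phg V E k \<alpha> w \<le> \<mu>" using assms(3) by auto
    moreover have "Phg V E k \<alpha> w = (1 / c) ^ k * Phg V E k \<alpha> z"
    proof -
      have "Phg V E k \<alpha> w = Phg V E k \<alpha> (\<lambda>v. (1/c) * z v)" by (rule Phg_cong[OF assms(1)]) (simp add: w_def)
      then show ?thesis using Phg_scale[OF assms(1), where c="1/c" and y=z and \<alpha>=\<alpha>] by simp
    qed
    ultimately have "Phg V E k \<alpha> z / c ^ k \<le> \<mu>" by (simp add: power_divide)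
    then show ?thesis using ck sp by (simp add: divide_le_eq mult.commute)
  qed
qed




lemma sum_upd:
  assumes "finite V" "i \<in> V"
  shows "(\<Sum>j\<in>V. g j ((y(i := c)) j)) = g i c + (\<Sum>j\<in>V - {i}. g j (y j))"
proof -
  have "(\<Sum>j\<in>V. g j ((y(i := c)) j)) = g i ((y(i := c)) i) + (\<Sum>j\<in>V - {i}. g j ((y(i := c)) j))"
    by (rule sum.remove[OF assms])
  also have "(\<Sum>j\<in>V - {i}. g j ((y(i := c)) j)) = (\<Sum>j\<in>V - {i}. g j (y j))" by (rule sum.cong) auto
  finally show ?thesis by simp
qed

lemma phi_form:
  assumes "k_uniform V E k" "i \<in> V"
  shows "Phg V E k \<alpha> (y(i := y i + t)) - \<mu> * (\<Sum>j\<in>V. (y(i := y i + t)) j ^ k)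
    = \<alpha> * (real (Defs.degree E i) * (y i + t) ^ k + (\<Sum>j\<in>V - {i}. real (Defs.degree E j) * y j ^ k))
      + (1 - \<alpha>) * real k * ((y i + t) * (\<Sum>e\<in>E. if i \<in> e then (\<Prod>v\<in>e - {i}. y v) else 0)
                              + (\<Sum>e\<in>E. if i \<in> e then 0 else (\<Prod>v\<in>e. y v)))
      - \<mu> * ((y i + t) ^ k + (\<Sum>j\<in>V - {i}. y j ^ k))"
proof -
  have fV: "finite V" using assms unfolding k_uniform_def by auto
  have fE: "finite E" using finite_E[OF assms(1)] .
  let ?z = "y(i := y i + t)"
  have s1: "(\<Sum>j\<in>V. real (Defs.degree E j) * ?z j ^ k) = real (Defs.degree E i) * (y i + t) ^ k + (\<Sum>j\<in>V - {i}. real (Defs.degree E j) * y j ^ k)"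
    using sum_upd[OF fV assms(2), of "\<lambda>j w. real (Defs.degree E j) * w ^ k"] by simp
  have s2: "(\<Sum>j\<in>V. ?z j ^ k) = (y i + t) ^ k + (\<Sum>j\<in>V - {i}. y j ^ k)"
    using sum_upd[OF fV assms(2), of "\<lambda>j w. w ^ k"] by simp
  have s3: "(\<Sum>e\<in>E. \<Prod>v\<in>e. ?z v) = (\<Sum>e\<in>E. (y i + t) * (if i \<in> e then (\<Prod>v\<in>e - {i}. y v) else 0) + (if i \<in> e then 0 else (\<Prod>v\<in>e. y v)))"
  proof (rule sum.cong[OF refl])
    fix e assume "e \<in> E"
    then have fe: "finite e" using assms(1) fV unfolding k_uniform_def by (auto intro: finite_subset)
    show "(\<Prod>v\<in>e. ?z v) = (y i + t) * (if i \<in> e then (\<Prod>v\<in>e - {i}. y v) else 0) + (if i \<in> e then 0 else (\<Prod>v\<in>e. y v))"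
    proof (cases "i \<in> e")
      case True
      then have "(\<Prod>v\<in>e. ?z v) = ?z i * (\<Prod>v\<in>e - {i}. ?z v)" using fe by (simp add: prod.remove)
      also have "(\<Prod>v\<in>e - {i}. ?z v) = (\<Prod>v\<in>e - {i}. y v)" by (rule prod.cong) auto
      finally show ?thesis using True by simp
    next
      case False
      then have "(\<Prod>v\<in>e. ?z v) = (\<Prod>v\<in>e. y v)" by (intro prod.cong) auto
      then show ?thesis using False by simp
    qed
  qed
  have s4: "(\<Sum>e\<in>E. \<Prod>v\<in>e. ?z v) = (y i + t) * (\<Sum>e\<in>E. if i \<in> e then (\<Prod>v\<in>e - {i}. y v) else 0)
                              + (\<Sum>e\<in>E. if i \<in> e then 0 else (\<Prod>v\<in>e. y v))"
    unfolding s3 by (simp add: sum.distrib sum_distrib_left)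
  show ?thesis unfolding Phg_def s1 s2 s4 ..
qed

lemma dadd: "((\<lambda>t. c + t) has_real_derivative 1) (at (0::real))" using DERIV_add[OF DERIV_const DERIV_ident] by simp
lemma dpow: "((\<lambda>t. (c + t) ^ k) has_real_derivative real k * c ^ (k - 1)) (at (0::real))"
  using DERIV_power[OF dadd[of c], where n=k] by simp
lemma dlin: "((\<lambda>t. (c + t) * S) has_real_derivative S) (at (0::real))"
  using DERIV_cmult_right[OF dadd[of c], where c=S] by simp

lemma phi_deriv:
  assumes "k_uniform V E k" "i \<in> V" "k \<ge> 1"
  shows "((\<lambda>t. Phg V E k \<alpha> (y(i := y i + t)) - \<mu> * (\<Sum>j\<in>V. (y(i := y i + t)) j ^ k))
     has_real_derivative (real k * (grad E k \<alpha> y i - \<mu> * y i ^ (k - 1)))) (at 0)"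
proof -
  have fE: "finite E" using finite_E[OF assms(1)] .
  let ?Sa = "\<Sum>e\<in>E. if i \<in> e then (\<Prod>v\<in>e - {i}. y v) else 0"
  have Sa: "?Sa = (\<Sum>e\<in>{e\<in>E. i \<in> e}. \<Prod>v\<in>e - {i}. y v)" by (rule sum.inter_filter[OF fE, symmetric])
  have d1: "((\<lambda>t. (y i + t) ^ k) has_real_derivative real k * y i ^ (k - 1)) (at 0)"
    by (rule dpow)
  have d2: "((\<lambda>t. (y i + t) * ?Sa) has_real_derivative ?Sa) (at 0)"
    by (rule dlin)
  have "((\<lambda>t. \<alpha> * (real (Defs.degree E i) * (y i + t) ^ k + (\<Sum>j\<in>V - {i}. real (Defs.degree E j) * y j ^ k))
      + (1 - \<alpha>) * real k * ((y i + t) * ?Sa + (\<Sum>e\<in>E. if i \<in> e then 0 else (\<Prod>v\<in>e. y v)))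
      - \<mu> * ((y i + t) ^ k + (\<Sum>j\<in>V - {i}. y j ^ k)))
     has_real_derivative (\<alpha> * (real (Defs.degree E i) * (real k * y i ^ (k - 1)) + 0)
       + (1 - \<alpha>) * real k * (?Sa + 0) - \<mu> * (real k * y i ^ (k - 1) + 0))) (at 0)"
    by (intro DERIV_diff DERIV_add DERIV_cmult DERIV_const d1 d2)
  moreover have "(\<alpha> * (real (Defs.degree E i) * (real k * y i ^ (k - 1)) + 0)
       + (1 - \<alpha>) * real k * (?Sa + 0) - \<mu> * (real k * y i ^ (k - 1) + 0))
     = real k * (grad E k \<alpha> y i - \<mu> * y i ^ (k - 1))"
    unfolding grad_def Sa by (simp add: algebra_simps)
  ultimately show ?thesis unfolding phi_form[OF assms(1,2)] by simp
qed

lemma grad_nonneg: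
  assumes "k_uniform V E k" "\<alpha> \<le> 1" "0 \<le> \<alpha>" "\<And>v. v \<in> V \<Longrightarrow> 0 \<le> y v" "i \<in> V"
  shows "0 \<le> grad E k \<alpha> y i"
proof -
  have "0 \<le> (\<Sum>e\<in>{e\<in>E. i \<in> e}. \<Prod>v\<in>e - {i}. y v)"
    using assms unfolding k_uniform_def by (intro sum_nonneg prod_nonneg) auto
  then show ?thesis unfolding grad_def using assms by (intro add_nonneg_nonneg mult_nonneg_nonneg) auto
qed

lemma KKT:
  assumes "k_uniform V E k" "k \<ge> 2" "0 \<le> \<alpha>" "\<alpha> \<le> 1" "y \<in> Sset V k"
    and "\<forall>z\<in>Sset V k. Phg V E k \<alpha> z \<le> Phg V E k \<alpha> y" and "i \<in> V"
  shows "grad E k \<alpha> y i = Phg V E k \<alpha> y * y i ^ (k - 1)"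
proof -
  define \<mu> where "\<mu> = Phg V E k \<alpha> y"
  define \<phi> where "\<phi> = (\<lambda>t. Phg V E k \<alpha> (y(i := y i + t)) - \<mu> * (\<Sum>j\<in>V. (y(i := y i + t)) j ^ k))"
  define l where "l = real k * (grad E k \<alpha> y i - \<mu> * y i ^ (k - 1))"
  have yS: "\<And>v. v \<in> V \<Longrightarrow> 0 \<le> y v" "(\<Sum>j\<in>V. y j ^ k) = 1" using assms(5) unfolding Sset_def by auto
  have D: "(\<phi> has_real_derivative l) (at 0)" unfolding \<phi>_def l_def using phi_deriv[OF assms(1,7)] assms(2) by simp
  have phi0: "\<phi> 0 = 0" unfolding \<phi>_def \<mu>_def using yS by simp
  have le: "\<phi> t \<le> 0" if "y i + t \<ge> 0" for t
  proof -
    have "Phg V E k \<alpha> (y(i := y i + t)) \<le> \<mu> * (\<Sum>j\<in>V. (y(i := y i + t)) j ^ k)"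
      using homog[OF assms(1,2), of \<alpha> \<mu> "y(i := y i + t)"] assms(6) yS(1) that unfolding \<mu>_def by auto
    then show ?thesis unfolding \<phi>_def by simp
  qed
  have kp: "real k > 0" using assms(2) by simp
  have "l = 0"
  proof (cases "y i > 0")
    case True
    show ?thesis
    proof (rule DERIV_local_max[OF D True])
      show "\<forall>t. \<bar>0 - t\<bar> < y i \<longrightarrow> \<phi> t \<le> \<phi> 0" using le phi0 by auto
    qed
  next
    case False
    then have yi: "y i = 0" using yS(1)[OF assms(7)] by simp
    have "\<not> l > 0"
    proof
      assume "l > 0"
      from DERIV_pos_inc_right[OF D this] obtain d where d: "d > 0" "\<And>h. 0 < h \<Longrightarrow> h < d \<Longrightarrow> \<phi> 0 < \<phi> (0 + h)" by blast
      have "\<phi> 0 < \<phi> (d / 2)" using d by simp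
      moreover have "\<phi> (d/2) \<le> 0" using le yi d by simp
      ultimately show False using phi0 by simp
    qed
    moreover have "grad E k \<alpha> y i \<ge> 0" using grad_nonneg[OF assms(1,4,3) yS(1) assms(7)] .
    moreover have z: "y i ^ (k - 1) = 0" using yi assms(2) by simp
    have "l = real k * grad E k \<alpha> y i" unfolding l_def z by simp
    ultimately show ?thesis using kp by (metis linorder_neqE_linordered_idom mult_nonneg_nonneg of_nat_0_le_iff order.strict_iff_not)
  qed
  then show ?thesis unfolding l_def \<mu>_def using kp by simp
qed




lemma Phg_cont: "continuous_on UNIV (Phg V E k \<alpha>)"
  unfolding Phg_def by (intro continuous_intros continuous_on_product_coordinates)

lemma Sset_compact:
  assumes "finite V" "k \<ge> 1"
  shows "compact (Sset V k)"
proof -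
  define B where "B = (\<lambda>i. if i \<in> V then {0..1::real} else {0})"
  have "compactin (product_topology (\<lambda>_. euclidean) UNIV) (PiE UNIV B)"
    by (subst compactin_PiE) (auto simp: B_def)
  then have c1: "compact (Pi UNIV B)" by (simp add: euclidean_product_topology PiE_UNIV_domain)
  have c2: "closed {y. (\<Sum>i\<in>V. y i ^ k) = (1::real)}"
    by (intro closed_Collect_eq continuous_intros continuous_on_product_coordinates)
  have "Sset V k = Pi UNIV B \<inter> {y. (\<Sum>i\<in>V. y i ^ k) = 1}"
  proof (intro set_eqI iffI)
    fix y assume y: "y \<in> Sset V k"
    have "y i \<le> 1" if "i \<in> V" for i
    proof -
      have "y i ^ k \<le> (\<Sum>i\<in>V. y i ^ k)"
        using y that assms by (intro member_le_sum) (auto simp: Sset_def)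
      then have "y i ^ k \<le> 1" using y by (simp add: Sset_def)
      then show ?thesis using y that assms by (auto simp: Sset_def power_le_one_iff)
    qed
    then show "y \<in> Pi UNIV B \<inter> {y. (\<Sum>i\<in>V. y i ^ k) = 1}" using y by (auto simp: Sset_def B_def)
  next
    fix y assume "y \<in> Pi UNIV B \<inter> {y. (\<Sum>i\<in>V. y i ^ k) = 1}"
    then show "y \<in> Sset V k" unfolding Sset_def B_def by (auto simp: Pi_iff split: if_splits)
  qed
  then show ?thesis using compact_Int_closed[OF c1 c2] by simp
qed

lemma maximizer:
  assumes "finite V" "k \<ge> 1" "Sset V k \<noteq> {}"
  shows "\<exists>y\<in>Sset V k. \<forall>z\<in>Sset V k. Phg V E k \<alpha> z \<le> Phg V E k \<alpha> y"
  using continuous_attains_sup[OF Sset_compact[OF assms(1,2)] assms(3) continuous_on_subset[OF Phg_cont subset_UNIV]] .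

lemma norm_prod_list_le:
  assumes "\<And>j. j \<in> set xs \<Longrightarrow> cmod (z j) \<le> M" "0 \<le> M"
  shows "cmod (prod_list (map z xs)) \<le> M ^ length xs"
  using assms
proof (induction xs)
  case Nil then show ?case by simp
next
  case (Cons a xs)
  have "cmod (prod_list (map z (a # xs))) = cmod (z a) * cmod (prod_list (map z xs))" by (simp add: norm_mult)
  also have "\<dots> \<le> M * M ^ length xs"
    using Cons by (intro mult_mono) auto
  finally show ?case by simp
qed

lemma eig_bound:
  assumes "finite V" "tensor_eigenvalue V k T lam"
  shows "cmod lam \<le> (\<Sum>i\<in>V. \<Sum>is\<in>index_tuples V (k - 1). \<bar>T (i # is)\<bar>)"
proof -
  obtain z where nz: "\<exists>i\<in>V. z i \<noteq> 0" and eq: "\<forall>i\<in>V. tensor_apply V k T z i = lam * z i ^ (k - 1)"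
    using assms(2) unfolding tensor_eigenvalue_def by blast
  have Vne: "V \<noteq> {}" using nz by auto
  define M where "M = Max ((\<lambda>i. cmod (z i)) ` V)"
  have "M \<in> (\<lambda>i. cmod (z i)) ` V" unfolding M_def using assms(1) Vne by (intro Max_in) auto
  then obtain i where iV: "i \<in> V" and Mi: "M = cmod (z i)" by blast
  have Mge: "cmod (z j) \<le> M" if "j \<in> V" for j using that assms(1) unfolding M_def by auto
  have Mpos: "M > 0" using nz Mge by (metis less_le_trans norm_not_less_zero zero_less_norm_iff not_le)
  have "cmod lam * M ^ (k - 1) = cmod (tensor_apply V k T z i)"
    using eq iV Mi by (simp add: norm_mult norm_power)
  also have "\<dots> \<le> (\<Sum>is\<in>index_tuples V (k - 1). cmod (complex_of_real (T (i # is)) * prod_list (map z is)))"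
    unfolding tensor_apply_def by (rule norm_sum)
  also have "\<dots> \<le> (\<Sum>is\<in>index_tuples V (k - 1). \<bar>T (i # is)\<bar> * M ^ (k - 1))"
  proof (rule sum_mono)
    fix xs assume "xs \<in> index_tuples V (k - 1)"
    then have "set xs \<subseteq> V" "length xs = k - 1" by (auto simp: index_tuples_def)
    then have "cmod (prod_list (map z xs)) \<le> M ^ (k - 1)"
      using norm_prod_list_le[of xs z M] Mge Mpos by auto
    then show "cmod (complex_of_real (T (i # xs)) * prod_list (map z xs)) \<le> \<bar>T (i # xs)\<bar> * M ^ (k - 1)"
      by (simp add: norm_mult mult_left_mono)
  qed
  also have "\<dots> = (\<Sum>is\<in>index_tuples V (k - 1). \<bar>T (i # is)\<bar>) * M ^ (k - 1)" by (simp add: sum_distrib_right)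
  finally have "cmod lam \<le> (\<Sum>is\<in>index_tuples V (k - 1). \<bar>T (i # is)\<bar>)"
    using Mpos by (simp add: mult_le_cancel_right)
  also have "\<dots> \<le> (\<Sum>i\<in>V. \<Sum>is\<in>index_tuples V (k - 1). \<bar>T (i # is)\<bar>)"
    using iV assms(1) by (intro member_le_sum) (auto intro: sum_nonneg)
  finally show ?thesis .
qed

lemma rho_ge:
  assumes "finite V" "tensor_eigenvalue V k T lam"
  shows "cmod lam \<le> tensor_spectral_radius V k T"
  unfolding tensor_spectral_radius_def
proof (rule cSup_upper)
  show "cmod lam \<in> {cmod lam |lam. tensor_eigenvalue V k T lam}" using assms by auto
  show "bdd_above {cmod lam |lam. tensor_eigenvalue V k T lam}"
    using eig_bound[OF assms(1)] by (auto intro!: bdd_aboveI)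
qed




lemma sum_swap_edges:
  fixes g :: "'b \<Rightarrow> real"
  assumes "finite E" "e \<in> E" "f \<in> E" "e \<noteq> f" "e' \<noteq> f'" "e' \<notin> E" "f' \<notin> E"
  shows "(\<Sum>s\<in>(E - {e, f}) \<union> {e', f'}. g s) = (\<Sum>s\<in>E. g s) - g e - g f + g e' + g f'"
proof -
  have fr: "finite (E - {e, f})" using assms by auto
  have "(\<Sum>s\<in>E. g s) = g e + (\<Sum>s\<in>E - {e}. g s)" by (rule sum.remove[OF assms(1,2)])
  also have "(\<Sum>s\<in>E - {e}. g s) = g f + (\<Sum>s\<in>E - {e} - {f}. g s)"
    using assms by (intro sum.remove) auto
  also have "E - {e} - {f} = E - {e, f}" by auto
  finally have a: "(\<Sum>s\<in>E. g s) = g e + (g f + (\<Sum>s\<in>E - {e, f}. g s))" .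
  have "(E - {e, f}) \<union> {e', f'} = insert e' (insert f' (E - {e, f}))" by auto
  then have "(\<Sum>s\<in>(E - {e, f}) \<union> {e', f'}. g s) = g e' + (g f' + (\<Sum>s\<in>E - {e, f}. g s))"
    using fr assms by simp
  then show ?thesis using a by (simp add: algebra_simps)
qed

lemma degree_sum:
  assumes "finite E"
  shows "real (Defs.degree E i) = (\<Sum>s\<in>E. if i \<in> s then 1 else 0)"
proof -
  have "real (Defs.degree E i) = (\<Sum>s\<in>{s\<in>E. i \<in> s}. 1)" unfolding Defs.degree_def by simp
  also have "\<dots> = (\<Sum>s\<in>E. if i \<in> s then 1 else 0)" by (rule sum.inter_filter[OF assms])
  finally show ?thesis .
qed

lemma grad_sum:
  assumes "finite E"
  shows "grad E k \<alpha> y i = \<alpha> * real (Defs.degree E i) * y i ^ (k - 1)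
      + (1 - \<alpha>) * (\<Sum>s\<in>E. if i \<in> s then (\<Prod>v\<in>s - {i}. y v) else 0)"
proof -
  have "(\<Sum>s\<in>{s\<in>E. i \<in> s}. \<Prod>v\<in>s - {i}. y v) = (\<Sum>s\<in>E. if i \<in> s then (\<Prod>v\<in>s - {i}. y v) else 0)"
    by (rule sum.inter_filter[OF assms])
  then show ?thesis unfolding grad_def by simp
qed

theorem theorem4p2:
  fixes VV :: "'a set" and E :: "'a set set" and k :: nat and \<alpha> :: real
    and x :: "'a \<Rightarrow> real" and e f U W :: "'a set"
  assumes "k \<ge> 2" and "0 \<le> \<alpha>" and "\<alpha> < 1"
    and "k_uniform VV E k" and "hg_connected VV E"
    and "alpha_perron_vector VV E k \<alpha> x"
    and "e \<in> E" and "f \<in> E" and "e \<inter> f = {}"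
    and "U \<subset> e" and "W \<subset> f"
    and "1 \<le> card U" and "card U = card W" and "card W \<le> k - 1"
    and "U \<union> (f - W) \<notin> E" and "W \<union> (e - U) \<notin> E"
    and "(\<Prod>w\<in>U. x w) \<ge> (\<Prod>w\<in>W. x w)"
    and "(\<Prod>w\<in>e - U. x w) \<le> (\<Prod>w\<in>f - W. x w)"
    and "(\<Prod>w\<in>U. x w) > (\<Prod>w\<in>W. x w) \<or> (\<Prod>w\<in>e - U. x w) < (\<Prod>w\<in>f - W. x w)"
  shows "rho_alpha VV E k \<alpha>
           < rho_alpha VV ((E - {e, f}) \<union> {U \<union> (f - W), W \<union> (e - U)}) k \<alpha>"
proof -
  note k2 = assms(1) and a0 = assms(2) and a1 = assms(3) and unif = assms(4)
  define e' where "e' = U \<union> (f - W)"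
  define f' where "f' = W \<union> (e - U)"
  define E' where "E' = (E - {e, f}) \<union> {e', f'}"
  define R where "R = rho_alpha VV E k \<alpha>"
  define xU where "xU = (\<Prod>w\<in>U. x w)"
  define xW where "xW = (\<Prod>w\<in>W. x w)"
  define xeU where "xeU = (\<Prod>w\<in>e - U. x w)"
  define xfW where "xfW = (\<Prod>w\<in>f - W. x w)"
  have k1: "k \<ge> 1" using k2 by simp
  have fV: "finite VV" using unif unfolding k_uniform_def by auto
  have fE: "finite E" using finite_E[OF unif] .
  have eV: "e \<subseteq> VV" and ce: "card e = k" and fVV: "f \<subseteq> VV" and cf: "card f = k"
    using unif assms(7,8) unfolding k_uniform_def by auto
  have fe: "finite e" and ff: "finite f" using eV fVV fV by (auto intro: finite_subset)
  have Ue: "U \<subseteq> e" and Wf: "W \<subseteq> f" using assms(10,11) by auto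
  have fU: "finite U" and fW: "finite W" using Ue Wf fe ff by (auto intro: finite_subset)
  have Une: "U \<noteq> {}" using assms(12) by auto
  obtain u where uU: "u \<in> U" using Une by auto
  obtain v where vfW: "v \<in> f - W" using assms(11) by auto
  have enf: "e \<noteq> f" using assms(9) Ue uU by auto
  have e'f': "e' \<noteq> f'" using uU Ue Wf assms(9) unfolding e'_def f'_def by auto
  have ce': "card e' = k"
  proof -
    have "card e' = card U + card (f - W)" unfolding e'_def
      using fU ff Ue Wf assms(9) by (intro card_Un_disjoint) auto
    also have "card (f - W) = k - card W" using cf Wf fW by (simp add: card_Diff_subset)
    finally show ?thesis using assms(13,14) by simp
  qed
  have cf': "card f' = k"
  proof -
    have "card f' = card W + card (e - U)" unfolding f'_def
      using fW fe Ue Wf assms(9) by (intro card_Un_disjoint) auto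
    also have "card (e - U) = k - card U" using ce Ue fU by (simp add: card_Diff_subset)
    finally show ?thesis using assms(13,14) by simp
  qed
  have unif': "k_uniform VV E' k"
    using unif ce' cf' eV fVV Ue Wf unfolding k_uniform_def E'_def e'_def f'_def by auto
  have fE': "finite E'" using finite_E[OF unif'] .
  have e'E: "e' \<notin> E" and f'E: "f' \<notin> E" using assms(15,16) unfolding e'_def f'_def by auto
  note swap = sum_swap_edges[OF fE assms(7,8) enf e'f' e'E f'E, folded E'_def]
  have deg: "Defs.degree E' i = Defs.degree E i" for i
  proof -
    have "real (Defs.degree E' i) = real (Defs.degree E i)"
      unfolding degree_sum[OF fE] degree_sum[OF fE'] swap
      using Ue Wf assms(9) unfolding e'_def f'_def by auto
    then show ?thesis by simp
  qed
  have xpos: "\<And>i. i \<in> VV \<Longrightarrow> x i > 0" and xsum: "(\<Sum>i\<in>VV. x i ^ k) = 1"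
    and xeig: "\<And>i. i \<in> VV \<Longrightarrow> tensor_apply VV k (A_alpha E k \<alpha>) (\<lambda>j. complex_of_real (x j)) i
               = complex_of_real R * complex_of_real (x i) ^ (k - 1)"
    using assms(6) unfolding alpha_perron_vector_def R_def by auto
  have gradE: "grad E k \<alpha> x i = R * x i ^ (k - 1)" if "i \<in> VV" for i
  proof -
    have "complex_of_real (grad E k \<alpha> x i) = complex_of_real (R * x i ^ (k - 1))"
      using xeig[OF that] unfolding tensor_apply_real Ta_grad[OF unif that k1] by simp
    then show ?thesis by (simp only: of_real_eq_iff)
  qed
  have PE: "Phg VV E k \<alpha> x = R"
  proof -
    have "Phg VV E k \<alpha> x = (\<Sum>i\<in>VV. x i * grad E k \<alpha> x i)" using sum_grad[OF unif k1] by simp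
    also have "\<dots> = (\<Sum>i\<in>VV. R * x i ^ k)"
    proof (rule sum.cong[OF refl])
      fix i assume "i \<in> VV"
      then have "x i * grad E k \<alpha> x i = R * (x i * x i ^ (k - 1))" using gradE by simp
      also have "x i * x i ^ (k - 1) = x i ^ k" using k1 by (metis Suc_diff_le diff_Suc_1 power_Suc)
      finally show "x i * grad E k \<alpha> x i = R * x i ^ k" .
    qed
    also have "\<dots> = R" using xsum by (simp add: sum_distrib_left[symmetric])
    finally show ?thesis .
  qed
  define x0 where "x0 = (\<lambda>i. if i \<in> VV then x i else 0)"
  have x0S: "x0 \<in> Sset VV k"
  proof -
    have "(\<Sum>i\<in>VV. x0 i ^ k) = (\<Sum>i\<in>VV. x i ^ k)" by (rule sum.cong) (auto simp: x0_def)
    then show ?thesis using xsum xpos unfolding Sset_def x0_def by (auto intro: less_imp_le)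
  qed
  have x0x: "\<And>v. v \<in> VV \<Longrightarrow> x0 v = x v" by (simp add: x0_def)
  have pe: "(\<Prod>w\<in>e. x w) = xU * xeU" unfolding xU_def xeU_def
    using prod.subset_diff[OF Ue fe, of x] by simp
  have pf: "(\<Prod>w\<in>f. x w) = xW * xfW" unfolding xW_def xfW_def
    using prod.subset_diff[OF Wf ff, of x] by simp
  have pe': "(\<Prod>w\<in>e'. x w) = xU * xfW" unfolding xU_def xfW_def e'_def
    using fU ff Ue assms(9) by (intro prod.union_disjoint) auto
  have pf': "(\<Prod>w\<in>f'. x w) = xW * xeU" unfolding xW_def xeU_def f'_def
    using fW fe Wf assms(9) by (intro prod.union_disjoint) auto
  have PE'E: "Phg VV E' k \<alpha> x - Phg VV E k \<alpha> x = (1 - \<alpha>) * real k * ((xU - xW) * (xfW - xeU))"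
  proof -
    have S: "(\<Sum>s\<in>E'. \<Prod>v\<in>s. x v) = (\<Sum>s\<in>E. \<Prod>v\<in>s. x v) - xU * xeU - xW * xfW + xU * xfW + xW * xeU"
      unfolding swap pe pf pe' pf' ..
    show ?thesis unfolding Phg_def deg S by (simp add: algebra_simps)
  qed
  have PE'ge: "Phg VV E' k \<alpha> x0 \<ge> R"
  proof -
    have "(xU - xW) * (xfW - xeU) \<ge> 0" using assms(17,18) unfolding xU_def xW_def xeU_def xfW_def
      by (intro mult_nonneg_nonneg) auto
    then have "(1 - \<alpha>) * real k * ((xU - xW) * (xfW - xeU)) \<ge> 0" using a1 by simp
    then show ?thesis using PE'E PE Phg_cong[OF unif' x0x] by simp
  qed
  obtain y where yS: "y \<in> Sset VV k" and ymax: "\<forall>z\<in>Sset VV k. Phg VV E' k \<alpha> z \<le> Phg VV E' k \<alpha> y"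
    using maximizer[OF fV k1] x0S by blast
  define \<mu> where "\<mu> = Phg VV E' k \<alpha> y"
  have eig': "tensor_eigenvalue VV k (A_alpha E' k \<alpha>) (complex_of_real \<mu>)"
    unfolding tensor_eigenvalue_def
  proof (intro exI conjI ballI)
    show "\<exists>i\<in>VV. complex_of_real (y i) \<noteq> 0"
    proof (rule ccontr)
      assume "\<not> (\<exists>i\<in>VV. complex_of_real (y i) \<noteq> 0)"
      then have "(\<Sum>i\<in>VV. y i ^ k) = 0" using k1 by simp
      then show False using yS unfolding Sset_def by simp
    qed
  next
    fix i assume iV: "i \<in> VV"
    have "grad E' k \<alpha> y i = \<mu> * y i ^ (k - 1)"
      unfolding \<mu>_def by (rule KKT[OF unif' k2 a0 _ yS ymax iV]) (use a1 in simp)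
    then show "tensor_apply VV k (A_alpha E' k \<alpha>) (\<lambda>j. complex_of_real (y j)) i
            = complex_of_real \<mu> * complex_of_real (y i) ^ (k - 1)"
      unfolding tensor_apply_real Ta_grad[OF unif' iV k1] by simp
  qed
  have rho': "\<mu> \<le> rho_alpha VV E' k \<alpha>"
    using rho_ge[OF fV eig'] unfolding rho_alpha_def by simp
  have mu_ge: "Phg VV E' k \<alpha> x0 \<le> \<mu>" using ymax x0S unfolding \<mu>_def by auto
  show ?thesis
  proof (rule ccontr)
    assume "\<not> ?thesis"
    then have "rho_alpha VV E' k \<alpha> \<le> R" unfolding E'_def e'_def f'_def R_def by simp
    then have eqR: "Phg VV E' k \<alpha> x0 = R" and x0max: "\<forall>z\<in>Sset VV k. Phg VV E' k \<alpha> z \<le> Phg VV E' k \<alpha> x0"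
      using rho' mu_ge PE'ge ymax unfolding \<mu>_def by auto
    have geq: "grad E' k \<alpha> x i = grad E k \<alpha> x i" if iV: "i \<in> VV" for i
    proof -
      have "grad E' k \<alpha> x0 i = Phg VV E' k \<alpha> x0 * x0 i ^ (k - 1)"
        by (rule KKT[OF unif' k2 a0 _ x0S x0max iV]) (use a1 in simp)
      then have "grad E' k \<alpha> x i = R * x i ^ (k - 1)"
        using grad_cong[OF unif' x0x iV] eqR x0x[OF iV] by simp
      then show ?thesis using gradE[OF iV] by simp
    qed
    have gdiff: "(1 - \<alpha>) * ((if i \<in> e' then (\<Prod>w\<in>e' - {i}. x w) else 0) + (if i \<in> f' then (\<Prod>w\<in>f' - {i}. x w) else 0)
                 - (if i \<in> e then (\<Prod>w\<in>e - {i}. x w) else 0) - (if i \<in> f then (\<Prod>w\<in>f - {i}. x w) else 0)) = 0"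
      if iV: "i \<in> VV" for i
    proof -
      have "grad E' k \<alpha> x i - grad E k \<alpha> x i = (1 - \<alpha>) * ((if i \<in> e' then (\<Prod>w\<in>e' - {i}. x w) else 0) + (if i \<in> f' then (\<Prod>w\<in>f' - {i}. x w) else 0)
                 - (if i \<in> e then (\<Prod>w\<in>e - {i}. x w) else 0) - (if i \<in> f then (\<Prod>w\<in>f - {i}. x w) else 0))"
        unfolding grad_sum[OF fE] grad_sum[OF fE'] swap deg by (simp add: algebra_simps)
      then show ?thesis using geq[OF iV] by simp
    qed
    have a1': "1 - \<alpha> \<noteq> 0" using a1 by simp
    have xpos': "\<And>A. A \<subseteq> VV \<Longrightarrow> (\<Prod>w\<in>A. x w) > 0" using xpos by (intro prod_pos) auto
    have uV: "u \<in> VV" using uU Ue eV by auto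
    have "(\<Prod>w\<in>e' - {u}. x w) = (\<Prod>w\<in>U - {u}. x w) * xfW"
    proof -
      have "e' - {u} = (U - {u}) \<union> (f - W)" using uU Ue assms(9) unfolding e'_def by auto
      then show ?thesis unfolding xfW_def using fU ff Ue assms(9) by (simp add: prod.union_disjoint Int_commute) (intro prod.union_disjoint, auto)
    qed
    moreover have "(\<Prod>w\<in>e - {u}. x w) = (\<Prod>w\<in>U - {u}. x w) * xeU"
    proof -
      have "e - {u} = (U - {u}) \<union> (e - U)" using uU Ue by auto
      then show ?thesis unfolding xeU_def using fU fe by (simp, intro prod.union_disjoint, auto)
    qed
    moreover have "u \<in> e'" "u \<notin> f'" "u \<in> e" "u \<notin> f" using uU Ue Wf assms(9) unfolding e'_def f'_def by auto
    ultimately have "(1 - \<alpha>) * ((\<Prod>w\<in>U - {u}. x w) * (xfW - xeU)) = 0"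
      using gdiff[OF uV] by (simp add: algebra_simps)
    then have "(\<Prod>w\<in>U - {u}. x w) * (xfW - xeU) = 0" using a1' by simp
    moreover have "(\<Prod>w\<in>U - {u}. x w) > 0" using Ue eV by (intro xpos') auto
    ultimately have eq1: "xfW = xeU" by simp
    have vV: "v \<in> VV" using vfW fVV by auto
    have "(\<Prod>w\<in>e' - {v}. x w) = xU * (\<Prod>w\<in>(f - W) - {v}. x w)"
    proof -
      have "e' - {v} = U \<union> ((f - W) - {v})" using vfW Ue assms(9) unfolding e'_def by auto
      then show ?thesis unfolding xU_def using fU ff Ue assms(9) by (simp, intro prod.union_disjoint, auto)
    qed
    moreover have "(\<Prod>w\<in>f - {v}. x w) = xW * (\<Prod>w\<in>(f - W) - {v}. x w)"
    proof -
      have "f - {v} = W \<union> ((f - W) - {v})" using vfW Wf by auto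
      then show ?thesis unfolding xW_def using fW ff by (simp, intro prod.union_disjoint, auto)
    qed
    moreover have "v \<in> e'" "v \<notin> f'" "v \<notin> e" "v \<in> f" using vfW Ue Wf assms(9) unfolding e'_def f'_def by auto
    ultimately have "(1 - \<alpha>) * ((\<Prod>w\<in>(f - W) - {v}. x w) * (xU - xW)) = 0"
      using gdiff[OF vV] by (simp add: algebra_simps)
    then have "(\<Prod>w\<in>(f - W) - {v}. x w) * (xU - xW) = 0" using a1' by simp
    moreover have "(\<Prod>w\<in>(f - W) - {v}. x w) > 0" using fVV by (intro xpos') auto
    ultimately have eq2: "xU = xW" by simp
    show False using assms(19) eq1 eq2 unfolding xU_def xW_def xeU_def xfW_def by simp
  qed
qed


end
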